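(* Let $X=\{a_1,\dots,a_\ell\}$ be a finite set of $\ell$ distinct points and $N\ge 2$. A probability measure $\mu$ on $X^2$ is an extreme point of the convex set $\mathcal{P}_{N\text{-}rep}(X^2)$ of $N$-representable two-point probability measures if and only if it is of the form $$\mu=\lambda\otimes\lambda+\frac1{N-1}\Big(\lambda\otimes\lambda-\sum_{i=1}^\ell\lambda_i\,\delta_i\otimes\delta_i\Big)$$ for some $\lambda\in\mathcal{P}_{\frac1N}(X)$.
   Context: $\mathcal{P}(X)$ denotes the probability measures on $X$, identified with vectors $(\lambda_1,\dots,\lambda_\ell)$ where $\lambda_i=\lambda(\{a_i\})$; $\delta_i$ is the Dirac measure at $a_i$. $\mathcal{P}_{\frac1N}(X)=\{\lambda\in\mathcal{P}(X):\lambda_i\in\frac1N\mathbb{Z}\ \forall i\}$. A probability measure $\gamma$ on $X^N$ is symmetric if $\gamma(A_1\times\cdots\times A_N)=\gamma(A_{\sigma(1)}\times\cdots\times A_{\sigma(N)})$ for all $A_i\subseteq X$ and permutations $\sigma$. A probability measure $\mu$ on $X^2$ is $N$-representable if there is a symmetric probability measure $\gamma$ on $X^N$ with two-point marginal $\gamma(A\times X^{N-2})=\mu(A)$ for all $A\subseteq X^2$; $\mathcal{P}_{N\text{-}rep}(X^2)$ denotes the set of such $\mu$. *)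

theory Defs
  imports "HOL-Analysis.Analysis"
begin

text \<open>The finite ground set X = {a_1,...,a_l} is the finite type 'a (l = CARD('a)).
Measures on X are vectors in real^'a, measures on X^2 vectors in real^('a \<times> 'a).
Points of X^N are lists of length N; a probability measure on the finite set X^N is a
nonnegative weight function on these lists with total mass 1.\<close>

definition prob_meas :: "(real^'a::finite) set" where
  "prob_meas = {lam. (\<forall>i. 0 \<le> lam $ i) \<and> (\<Sum>i\<in>UNIV. lam $ i) = 1}"

definition prob_meas_grid :: "nat \<Rightarrow> (real^'a::finite) set" where
  "prob_meas_grid N = {lam \<in> prob_meas. \<forall>i. real N * lam $ i \<in> \<int>}"

definition symmetric_meas :: "nat \<Rightarrow> ('a list \<Rightarrow> real) \<Rightarrow> bool" where
  "symmetric_meas N \<gamma> \<longleftrightarrow>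
     (\<forall>xs \<sigma>. length xs = N \<longrightarrow> \<sigma> permutes {..<N} \<longrightarrow>
        \<gamma> (map (\<lambda>k. xs ! \<sigma> k) [0..<N]) = \<gamma> xs)"

definition prob_meas_XN :: "nat \<Rightarrow> ('a list \<Rightarrow> real) \<Rightarrow> bool" where
  "prob_meas_XN N \<gamma> \<longleftrightarrow>
     (\<forall>xs. length xs = N \<longrightarrow> 0 \<le> \<gamma> xs) \<and> (\<Sum>xs\<in>{xs. length xs = N}. \<gamma> xs) = 1"

definition two_point_marginal :: "nat \<Rightarrow> ('a::finite list \<Rightarrow> real) \<Rightarrow> real^('a \<times> 'a)" where
  "two_point_marginal N \<gamma> =
     (\<chi> p. \<Sum>xs\<in>{xs. length xs = N \<and> xs ! 0 = fst p \<and> xs ! 1 = snd p}. \<gamma> xs)"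

definition N_rep :: "nat \<Rightarrow> (real^('a::finite \<times> 'a)) set" where
  "N_rep N = {mu. \<exists>\<gamma>. prob_meas_XN N \<gamma> \<and> symmetric_meas N \<gamma> \<and> mu = two_point_marginal N \<gamma>}"

end

theory Submission
  imports Defs
begin


definition permL :: "nat \<Rightarrow> (nat \<Rightarrow> nat) \<Rightarrow> 'a list \<Rightarrow> 'a list" where
  "permL N \<sigma> xs = map (\<lambda>k. xs ! \<sigma> k) [0..<N]"

definition ind :: "bool \<Rightarrow> real" where "ind b = (if b then 1 else 0)"

definition cnt :: "'a list \<Rightarrow> 'a \<Rightarrow> real" where
  "cnt xs a = (\<Sum>k<length xs. ind (xs ! k = a))"

definition lamof :: "nat \<Rightarrow> 'a::finite list \<Rightarrow> real^'a" where
  "lamof N xs = (\<chi> a. cnt xs a / real N)"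

definition Mf :: "nat \<Rightarrow> real^'a::finite \<Rightarrow> real^('a \<times> 'a)" where
  "Mf N lam = (\<chi> p. lam $ fst p * lam $ snd p
                + (1 / (real N - 1)) * (lam $ fst p * lam $ snd p
                    - (if fst p = snd p then lam $ fst p else 0)))"

lemma finite_V: "finite {xs :: 'a::finite list. length xs = N}"
  using finite_lists_length_eq[of "UNIV :: 'a set" N] by simp

lemma permL_nth: "m < N \<Longrightarrow> permL N \<sigma> xs ! m = xs ! \<sigma> m"
  by (simp add: permL_def)

lemma permL_length[simp]: "length (permL N \<sigma> xs) = N"
  by (simp add: permL_def)

lemma permL_inv:
  assumes "\<sigma> permutes {..<N}" "length xs = N"
  shows "permL N (inv \<sigma>) (permL N \<sigma> xs) = xs" "permL N \<sigma> (permL N (inv \<sigma>) xs) = xs"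
proof -
  have inv: "inv \<sigma> permutes {..<N}" using assms(1) by (rule permutes_inv)
  show "permL N (inv \<sigma>) (permL N \<sigma> xs) = xs"
  proof (rule nth_equalityI)
    show "length (permL N (inv \<sigma>) (permL N \<sigma> xs)) = length xs" using assms by simp
    fix m assume "m < length (permL N (inv \<sigma>) (permL N \<sigma> xs))"
    then have m: "m < N" by simp
    have "inv \<sigma> m < N" using permutes_in_image[OF inv] m by simp
    then show "permL N (inv \<sigma>) (permL N \<sigma> xs) ! m = xs ! m"
      using m by (simp add: permL_nth permutes_inverses[OF assms(1)])
  qed
  show "permL N \<sigma> (permL N (inv \<sigma>) xs) = xs"
  proof (rule nth_equalityI)
    show "length (permL N \<sigma> (permL N (inv \<sigma>) xs)) = length xs" using assms by simp
    fix m assume "m < length (permL N \<sigma> (permL N (inv \<sigma>) xs))"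
    then have m: "m < N" by simp
    have "\<sigma> m < N" using permutes_in_image[OF assms(1)] m by simp
    then show "permL N \<sigma> (permL N (inv \<sigma>) xs) ! m = xs ! m"
      using m by (simp add: permL_nth permutes_inverses[OF assms(1)])
  qed
qed

lemma permL_bij:
  assumes "\<sigma> permutes {..<N}"
  shows "bij_betw (permL N \<sigma>) {xs. length xs = N} {xs. length xs = N}"
  by (rule bij_betw_byWitness[where f'="permL N (inv \<sigma>)"]) (auto simp: permL_inv[OF assms])

lemma sum_sym:
  assumes sym: "symmetric_meas N \<gamma>" and s: "\<sigma> permutes {..<N}"
  shows "(\<Sum>xs\<in>{xs. length xs = N}. \<gamma> xs * f (permL N \<sigma> xs)) = (\<Sum>xs\<in>{xs. length xs = N}. \<gamma> xs * f xs)"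
proof -
  have "(\<Sum>xs\<in>{xs. length xs = N}. \<gamma> xs * f (permL N \<sigma> xs)) = (\<Sum>xs\<in>{xs. length xs = N}. \<gamma> (permL N \<sigma> xs) * f (permL N \<sigma> xs))"
    using sym s by (intro sum.cong) (auto simp: symmetric_meas_def permL_def)
  also have "\<dots> = (\<Sum>xs\<in>{xs. length xs = N}. \<gamma> xs * f xs)"
    using sum.reindex_bij_betw[OF permL_bij[OF s], of "\<lambda>xs. \<gamma> xs * f xs"] by simp
  finally show ?thesis .
qed

lemma cnt_permL: assumes "\<sigma> permutes {..<N}" "length xs = N" shows "cnt (permL N \<sigma> xs) a = cnt xs a"
proof -
  have "cnt (permL N \<sigma> xs) a = (\<Sum>m<N. ind (xs ! \<sigma> m = a))"
    unfolding cnt_def by (intro sum.cong) (auto simp: permL_nth)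
  also have "\<dots> = (\<Sum>k<N. ind (xs ! k = a))"
    using sum.reindex_bij_betw[OF permutes_imp_bij[OF assms(1)], of "\<lambda>k. ind (xs ! k = a)"] by simp
  finally show ?thesis using assms by (simp add: cnt_def)
qed

lemma swap_exists:
  fixes N k l :: nat
  assumes "k < N" "l < N" "k \<noteq> l" "N \<ge> 2"
  shows "\<exists>\<sigma>. \<sigma> permutes {..<N} \<and> \<sigma> 0 = k \<and> \<sigma> 1 = l"
proof -
  define l' where "l' = Transposition.transpose 0 k l"
  define \<sigma> where "\<sigma> = Transposition.transpose 0 k \<circ> Transposition.transpose 1 l'"
  have l'N: "l' < N" using assms unfolding l'_def by (auto simp: Transposition.transpose_def)
  have l'0: "l' \<noteq> 0" using assms unfolding l'_def by (auto simp: Transposition.transpose_def)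
  have "\<sigma> permutes {..<N}" unfolding \<sigma>_def
    using assms l'N by (intro permutes_compose permutes_swap_id) auto
  moreover have "\<sigma> 0 = k" using l'0 by (simp add: \<sigma>_def Transposition.transpose_def)
  moreover have "\<sigma> 1 = l" using assms by (auto simp: \<sigma>_def l'_def Transposition.transpose_def)
  ultimately show ?thesis by blast
qed

lemma marginal_formula:
  fixes \<gamma> :: "'a::finite list \<Rightarrow> real"
  assumes sym: "symmetric_meas N \<gamma>" and N: "N \<ge> 2"
  shows "two_point_marginal N \<gamma> = (\<Sum>xs\<in>{xs. length xs = N}. \<gamma> xs *\<^sub>R Mf N (lamof N xs))"
proof (rule vec_eq_iff[THEN iffD2], rule allI)
  fix p :: "'a \<times> 'a"
  obtain i j where p: "p = (i, j)" by (cases p)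
  define V where "V = {xs :: 'a list. length xs = N}"
  define T where "T k l = (\<Sum>xs\<in>V. \<gamma> xs * (ind (xs!k = i) * ind (xs!l = j)))" for k l
  define Q where "Q xs = (\<Sum>k<N. \<Sum>l\<in>{..<N}-{k}. ind (xs!k = i) * ind (xs!l = j))" for xs
  have fV: "finite V" unfolding V_def by (rule finite_V)
  have lhs: "two_point_marginal N \<gamma> $ p = T 0 1"
  proof -
    have "T 0 1 = (\<Sum>xs\<in>V. if xs!0 = i \<and> xs!1 = j then \<gamma> xs else 0)"
      unfolding T_def by (intro sum.cong) (auto simp: ind_def)
    also have "\<dots> = (\<Sum>xs\<in>{xs\<in>V. xs!0 = i \<and> xs!1 = j}. \<gamma> xs)"
      using fV by (simp add: sum.inter_filter)
    finally show ?thesis unfolding two_point_marginal_def p V_def by simp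
  qed
  have Tsym: "T k l = T 0 1" if kl: "k < N" "l < N" "k \<noteq> l" for k l
  proof -
    obtain \<sigma> where s: "\<sigma> permutes {..<N}" "\<sigma> 0 = k" "\<sigma> 1 = l" using swap_exists[OF kl N] by blast
    have "T 0 1 = (\<Sum>xs\<in>V. \<gamma> xs * (\<lambda>ys. ind (ys!0 = i) * ind (ys!1 = j)) (permL N \<sigma> xs))"
      unfolding T_def V_def by (rule sum_sym[OF sym s(1), symmetric])
    also have "\<dots> = T k l" unfolding T_def V_def using N s by (intro sum.cong) (auto simp: permL_nth)
    finally show ?thesis by simp
  qed
  have A: "(\<Sum>k<N. \<Sum>l\<in>{..<N}-{k}. T k l) = real N * (real N - 1) * T 0 1"
  proof -
    have "(\<Sum>k<N. \<Sum>l\<in>{..<N}-{k}. T k l) = (\<Sum>k<N. \<Sum>l\<in>{..<N}-{k}. T 0 1)"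
      by (intro sum.cong refl Tsym) auto
    also have "\<dots> = real N * (real N - 1) * T 0 1" using N by (simp add: of_nat_diff)
    finally show ?thesis .
  qed
  have B: "(\<Sum>k<N. \<Sum>l\<in>{..<N}-{k}. T k l) = (\<Sum>xs\<in>V. \<gamma> xs * Q xs)"
  proof -
    have "(\<Sum>k<N. \<Sum>l\<in>{..<N}-{k}. T k l) = (\<Sum>k<N. \<Sum>xs\<in>V. \<Sum>l\<in>{..<N}-{k}. \<gamma> xs * (ind (xs!k = i) * ind (xs!l = j)))"
      unfolding T_def by (intro sum.cong refl) (rule sum.swap)
    also have "\<dots> = (\<Sum>xs\<in>V. \<Sum>k<N. \<Sum>l\<in>{..<N}-{k}. \<gamma> xs * (ind (xs!k = i) * ind (xs!l = j)))"
      by (rule sum.swap)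
    also have "\<dots> = (\<Sum>xs\<in>V. \<gamma> xs * Q xs)"
      unfolding Q_def by (simp add: sum_distrib_left)
    finally show ?thesis .
  qed
  have C: "Q xs = cnt xs i * cnt xs j - ind (i=j) * cnt xs i" if "xs \<in> V" for xs
  proof -
    have len: "length xs = N" using that V_def by simp
    have "Q xs = (\<Sum>k<N. ind (xs!k = i) * (cnt xs j - ind (xs!k = j)))"
      unfolding Q_def
      by (intro sum.cong refl) (simp add: sum_distrib_left[symmetric] sum_diff1 cnt_def len)
    also have "\<dots> = (\<Sum>k<N. ind (xs!k = i) * cnt xs j - ind (i=j) * ind (xs!k = i))"
      by (intro sum.cong refl) (auto simp: ind_def)
    also have "\<dots> = cnt xs i * cnt xs j - ind (i=j) * cnt xs i"
      by (simp add: sum_subtractf sum_distrib_left[symmetric] sum_distrib_right[symmetric] cnt_def len)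
    finally show ?thesis .
  qed
  have D: "Mf N (lamof N xs) $ (i,j) = (cnt xs i * cnt xs j - ind (i=j) * cnt xs i) / (real N * (real N - 1))" for xs
  proof -
    have "real N - 1 \<noteq> 0" "real N \<noteq> 0" using N by auto
    then show ?thesis unfolding Mf_def lamof_def ind_def by (simp add: field_simps)
  qed
  have nz: "real N * (real N - 1) \<noteq> 0" using N by auto
  have "two_point_marginal N \<gamma> $ p = (\<Sum>xs\<in>V. \<gamma> xs * Q xs) / (real N * (real N - 1))"
    using lhs A B nz by (simp add: field_simps)
  also have "\<dots> = (\<Sum>xs\<in>V. \<gamma> xs * Mf N (lamof N xs) $ (i,j))"
    unfolding sum_divide_distrib D using C by (intro sum.cong refl) simp
  finally show "two_point_marginal N \<gamma> $ p = (\<Sum>xs\<in>{xs. length xs = N}. \<gamma> xs *\<^sub>R Mf N (lamof N xs)) $ p"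
    unfolding p V_def by simp
qed



lemma cnt_count: "cnt xs a = real (count_list xs a)"
  by (induction xs) (simp_all add: cnt_def ind_def sum.lessThan_Suc_shift del: sum.lessThan_Suc)

lemma sum_cnt: fixes xs :: "'a::finite list" shows "(\<Sum>a\<in>UNIV. cnt xs a) = real (length xs)"
proof -
  have "(\<Sum>a\<in>UNIV. cnt xs a) = real (\<Sum>a\<in>(UNIV::'a::finite set). count_list xs a)"
    by (simp add: cnt_count)
  also have "\<dots> = real (length xs)" by (subst sum_count_set) auto
  finally show ?thesis .
qed

lemma lamof_grid:
  fixes xs :: "'a::finite list"
  assumes "length xs = N" "N \<ge> 1"
  shows "lamof N xs \<in> prob_meas_grid N"
proof -
  have N0: "real N \<noteq> 0" using assms by auto
  have "(\<Sum>i\<in>UNIV. lamof N xs $ i) = 1"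
    using N0 assms by (simp add: lamof_def sum_divide_distrib[symmetric] sum_cnt)
  moreover have "\<forall>i. 0 \<le> lamof N xs $ i" by (simp add: lamof_def cnt_count)
  moreover have "\<forall>i. real N * lamof N xs $ i \<in> \<int>" using N0 by (simp add: lamof_def cnt_count)
  ultimately show ?thesis by (simp add: prob_meas_grid_def prob_meas_def)
qed

lemma count_replicate: "count_list (replicate m b) a = (if b = a then m else 0)"
  by (induction m) auto

lemma count_concat:
  "distinct ds \<Longrightarrow> count_list (concat (map (\<lambda>b. replicate (n b) b) ds)) a = (if a \<in> set ds then n a else 0)"
  by (induction ds) (auto simp: count_replicate)

lemma grid_lamof:
  assumes lam: "lam \<in> prob_meas_grid N" and N: "N \<ge> 1"
  shows "\<exists>xs :: 'a::finite list. length xs = N \<and> lamof N xs = lam"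
proof -
  define n where "n a = nat \<lfloor>real N * lam $ a\<rfloor>" for a
  have nn: "real (n a) = real N * lam $ a" for a
  proof -
    have "real N * lam $ a \<in> \<int>" "0 \<le> lam $ a" using lam by (auto simp: prob_meas_grid_def prob_meas_def)
    then show ?thesis unfolding n_def by (metis Ints_cases floor_of_int of_int_0_le_iff of_nat_nat zero_le_mult_iff of_nat_0_le_iff)
  qed
  obtain ds :: "'a list" where ds: "set ds = UNIV" "distinct ds" using finite_distinct_list[of "UNIV :: 'a set"] by auto
  define xs where "xs = concat (map (\<lambda>b. replicate (n b) b) ds)"
  have cx: "count_list xs a = n a" for a unfolding xs_def using ds by (simp add: count_concat)
  have "real (length xs) = (\<Sum>a\<in>UNIV. real N * lam $ a)"
    using sum_cnt[of xs] by (simp add: cnt_count cx nn)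
  also have "\<dots> = real N" using lam by (simp add: prob_meas_grid_def prob_meas_def sum_distrib_left[symmetric])
  finally have len: "length xs = N" by simp
  have "lamof N xs = lam" using N by (simp add: vec_eq_iff lamof_def cnt_count cx nn)
  then show ?thesis using len by blast
qed

lemma Mf_in_Nrep:
  fixes xs0 :: "'a::finite list"
  assumes N: "N \<ge> 2" and xs0: "length xs0 = N"
  shows "Mf N (lamof N xs0) \<in> N_rep N"
proof -
  define V where "V = {xs :: 'a list. length xs = N}"
  define C where "C = {xs \<in> V. \<forall>a. cnt xs a = cnt xs0 a}"
  define \<gamma> where "\<gamma> xs = (if xs \<in> C then 1 / real (card C) else 0)" for xs
  have fV: "finite V" unfolding V_def by (rule finite_V)
  have CV: "C \<subseteq> V" by (auto simp: C_def)
  have fC: "finite C" using fV CV finite_subset by blast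
  have x0C: "xs0 \<in> C" using xs0 by (simp add: C_def V_def)
  have cC: "real (card C) > 0" using fC x0C card_gt_0_iff by fastforce
  have VC: "V \<inter> C = C" using CV by blast
  have prob: "prob_meas_XN N \<gamma>"
    unfolding prob_meas_XN_def
  proof
    show "\<forall>xs. length xs = N \<longrightarrow> 0 \<le> \<gamma> xs" by (simp add: \<gamma>_def)
    have "(\<Sum>xs\<in>V. \<gamma> xs) = (\<Sum>xs\<in>V \<inter> C. 1 / real (card C))"
      unfolding \<gamma>_def by (rule sum.inter_restrict[OF fV, symmetric])
    also have "\<dots> = 1" using cC VC by simp
    finally show "(\<Sum>xs\<in>{xs. length xs = N}. \<gamma> xs) = 1" by (simp add: V_def)
  qed
  have sym: "symmetric_meas N \<gamma>"
    unfolding symmetric_meas_def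
  proof (intro allI impI)
    fix xs :: "'a list" and \<sigma> assume l: "length xs = N" and s: "\<sigma> permutes {..<N}"
    have "(permL N \<sigma> xs \<in> C) = (xs \<in> C)"
      using l by (simp add: C_def V_def cnt_permL[OF s l])
    then show "\<gamma> (map (\<lambda>k. xs ! \<sigma> k) [0..<N]) = \<gamma> xs"
      by (simp add: \<gamma>_def permL_def)
  qed
  have "two_point_marginal N \<gamma> = (\<Sum>xs\<in>V. \<gamma> xs *\<^sub>R Mf N (lamof N xs))"
    unfolding V_def by (rule marginal_formula[OF sym N])
  also have "\<dots> = (\<Sum>xs\<in>V. if xs \<in> C then (1 / real (card C)) *\<^sub>R Mf N (lamof N xs0) else 0)"
  proof (intro sum.cong refl)
    fix xs assume "xs \<in> V"
    show "\<gamma> xs *\<^sub>R Mf N (lamof N xs) = (if xs \<in> C then (1 / real (card C)) *\<^sub>R Mf N (lamof N xs0) else 0)"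
    proof (cases "xs \<in> C")
      case True
      then have "lamof N xs = lamof N xs0" by (simp add: C_def lamof_def)
      then show ?thesis using True by (simp add: \<gamma>_def)
    qed (simp add: \<gamma>_def)
  qed
  also have "\<dots> = (\<Sum>xs\<in>C. (1 / real (card C)) *\<^sub>R Mf N (lamof N xs0))"
    using sum.inter_restrict[OF fV, of "\<lambda>xs. (1 / real (card C)) *\<^sub>R Mf N (lamof N xs0)" C] VC by simp
  also have "\<dots> = real (card C) *\<^sub>R ((1 / real (card C)) *\<^sub>R Mf N (lamof N xs0))" by (rule sum_constant_scaleR)
  also have "\<dots> = Mf N (lamof N xs0)" using cC by simp
  finally show ?thesis using prob sym unfolding N_rep_def by (intro CollectI exI[of _ \<gamma>]) simp
qed

lemma convex_Nrep: "convex (N_rep N)"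
  unfolding convex_def
proof (intro ballI allI impI)
  fix x y :: "real^('a \<times> 'a)" and u v :: real
  assume x: "x \<in> N_rep N" and y: "y \<in> N_rep N" and u: "0 \<le> u" and v: "0 \<le> v" and uv: "u + v = 1"
  obtain \<gamma>1 where g1: "prob_meas_XN N \<gamma>1" "symmetric_meas N \<gamma>1" "x = two_point_marginal N \<gamma>1"
    using x unfolding N_rep_def by blast
  obtain \<gamma>2 where g2: "prob_meas_XN N \<gamma>2" "symmetric_meas N \<gamma>2" "y = two_point_marginal N \<gamma>2"
    using y unfolding N_rep_def by blast
  define \<gamma> where "\<gamma> xs = u * \<gamma>1 xs + v * \<gamma>2 xs" for xs
  have "prob_meas_XN N \<gamma>"
    using g1(1) g2(1) u v uv
    by (simp add: prob_meas_XN_def \<gamma>_def sum.distrib sum_distrib_left[symmetric])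
  moreover have "symmetric_meas N \<gamma>"
    using g1(2) g2(2) by (simp add: symmetric_meas_def \<gamma>_def)
  moreover have "u *\<^sub>R x + v *\<^sub>R y = two_point_marginal N \<gamma>"
    using g1(3) g2(3)
    by (simp add: vec_eq_iff two_point_marginal_def \<gamma>_def sum.distrib sum_distrib_left)
  ultimately show "u *\<^sub>R x + v *\<^sub>R y \<in> N_rep N" unfolding N_rep_def by blast
qed

lemma Nrep_hull:
  assumes N: "N \<ge> 2"
  shows "N_rep N = convex hull ((\<lambda>xs. Mf N (lamof N xs)) ` {xs :: 'a::finite list. length xs = N})"
    (is "_ = convex hull ?P")
proof
  show "convex hull ?P \<subseteq> N_rep N"
    by (rule hull_minimal) (use N Mf_in_Nrep convex_Nrep in auto)
  show "N_rep N \<subseteq> convex hull ?P"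
  proof
    fix mu :: "real^('a \<times> 'a)" assume "mu \<in> N_rep N"
    then obtain \<gamma> where g: "prob_meas_XN N \<gamma>" "symmetric_meas N \<gamma>" "mu = two_point_marginal N \<gamma>"
      unfolding N_rep_def by blast
    have "mu = (\<Sum>xs\<in>{xs. length xs = N}. \<gamma> xs *\<^sub>R Mf N (lamof N xs))"
      using g marginal_formula[OF g(2) N] by simp
    also have "\<dots> \<in> convex hull ?P"
      by (rule convex_sum) (use g(1) finite_V in \<open>auto simp: prob_meas_XN_def intro: hull_inc\<close>)
    finally show "mu \<in> convex hull ?P" .
  qed
qed



definition wv :: "nat \<Rightarrow> real^'a::finite \<Rightarrow> real^('a \<times> 'a)" where
  "wv N lam0 = (\<chi> p. (if fst p = snd p then 1 else 0) - 2 * (1 + 1 / (real N - 1)) * lam0 $ fst p)"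

lemma wv_Mf:
  fixes lam lam0 :: "real^'a::finite"
  assumes lam: "lam \<in> prob_meas"
  shows "wv N lam0 \<bullet> Mf N lam = (1 + 1 / (real N - 1)) * (\<Sum>i\<in>UNIV. (lam $ i - lam0 $ i)^2)
            - (1 + 1 / (real N - 1)) * (\<Sum>i\<in>UNIV. (lam0 $ i)^2) - 1 / (real N - 1)"
proof -
  define s where "s = 1 / (real N - 1)"
  have sum1: "(\<Sum>j\<in>UNIV. lam $ j) = 1" using lam by (simp add: prob_meas_def)
  have Mij: "Mf N lam $ (i, j) = (1 + s) * (lam $ i * lam $ j) - s * (if i = j then lam $ i else 0)" for i j
    by (simp add: Mf_def s_def algebra_simps)
  have wij: "wv N lam0 $ (i, j) = (if i = j then 1 else 0) - 2 * (1 + s) * lam0 $ i" for i j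
    by (simp add: wv_def s_def)
  have row: "(\<Sum>j\<in>UNIV. wv N lam0 $ (i, j) * Mf N lam $ (i, j))
      = (1 + s) * (lam $ i)^2 - s * lam $ i - 2 * (1 + s) * lam0 $ i * lam $ i" for i
  proof -
    have "(\<Sum>j\<in>UNIV. wv N lam0 $ (i, j) * Mf N lam $ (i, j))
       = (\<Sum>j\<in>UNIV. (if i = j then Mf N lam $ (i, j) else 0)) - 2 * (1 + s) * lam0 $ i * (\<Sum>j\<in>UNIV. Mf N lam $ (i, j))"
      unfolding wij
    proof -
      have "(\<Sum>j\<in>UNIV. ((if i = j then 1 else 0) - 2 * (1 + s) * lam0 $ i) * Mf N lam $ (i, j))
          = (\<Sum>j\<in>UNIV. (if i = j then Mf N lam $ (i, j) else 0) - 2 * (1 + s) * lam0 $ i * Mf N lam $ (i, j))"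
        by (intro sum.cong refl) (simp add: algebra_simps)
      then show "(\<Sum>j\<in>UNIV. ((if i = j then 1 else 0) - 2 * (1 + s) * lam0 $ i) * Mf N lam $ (i, j))
       = (\<Sum>j\<in>UNIV. (if i = j then Mf N lam $ (i, j) else 0)) - 2 * (1 + s) * lam0 $ i * (\<Sum>j\<in>UNIV. Mf N lam $ (i, j))"
        by (simp only: sum_subtractf sum_distrib_left)
    qed
    also have "(\<Sum>j\<in>UNIV. Mf N lam $ (i, j)) = (1 + s) * lam $ i * (\<Sum>j\<in>UNIV. lam $ j) - s * lam $ i"
      unfolding Mij by (simp add: sum_subtractf sum_distrib_left mult.assoc) (simp flip: sum_distrib_left)
    also have "(\<Sum>j\<in>UNIV. (if i = j then Mf N lam $ (i, j) else 0)) = Mf N lam $ (i, i)"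
      by simp
    finally show ?thesis unfolding sum1 Mij by (simp add: algebra_simps power2_eq_square)
  qed
  have "wv N lam0 \<bullet> Mf N lam = (\<Sum>p\<in>UNIV. wv N lam0 $ p * Mf N lam $ p)"
    by (simp add: inner_vec_def)
  also have "\<dots> = (\<Sum>i\<in>UNIV. \<Sum>j\<in>UNIV. wv N lam0 $ (i, j) * Mf N lam $ (i, j))"
    by (simp add: sum.cartesian_product)
  also have "\<dots> = (\<Sum>i\<in>UNIV. (1 + s) * (lam $ i)^2 - s * lam $ i - 2 * (1 + s) * lam0 $ i * lam $ i)"
    by (simp add: row)
  also have "\<dots> = (1 + s) * (\<Sum>i\<in>UNIV. (lam $ i - lam0 $ i)^2) - (1 + s) * (\<Sum>i\<in>UNIV. (lam0 $ i)^2) - s"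
    using sum1
    by (simp add: sum_subtractf sum_distrib_left power2_diff algebra_simps sum.distrib
           flip: sum_distrib_left)
  finally show ?thesis by (simp add: s_def)
qed

theorem theorem2p2:
  fixes N :: nat and mu :: "real^('a::finite \<times> 'a)"
  assumes "N \<ge> 2"
  shows "mu extreme_point_of (N_rep N) \<longleftrightarrow>
    (\<exists>lam \<in> prob_meas_grid N.
       mu = (\<chi> p. lam $ fst p * lam $ snd p
                + (1 / (real N - 1)) * (lam $ fst p * lam $ snd p
                    - (if fst p = snd p then lam $ fst p else 0))))"
proof -
  have N: "N \<ge> 2" by fact
  define P where "P = (\<lambda>xs. Mf N (lamof N xs)) ` {xs :: 'a list. length xs = N}"
  have hull: "N_rep N = convex hull P" unfolding P_def by (rule Nrep_hull[OF N])
  have fP: "finite P" unfolding P_def using finite_V by blast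
  have rhs: "(\<exists>lam \<in> prob_meas_grid N.
       mu = (\<chi> p. lam $ fst p * lam $ snd p
                + (1 / (real N - 1)) * (lam $ fst p * lam $ snd p
                    - (if fst p = snd p then lam $ fst p else 0)))) \<longleftrightarrow>
       (\<exists>lam \<in> prob_meas_grid N. mu = Mf N lam)"
    by (simp add: Mf_def)
  show ?thesis
    unfolding rhs
  proof
    assume "mu extreme_point_of N_rep N"
    then have "mu \<in> P" unfolding hull by (rule extreme_point_of_convex_hull)
    then obtain xs :: "'a list" where xs: "length xs = N" "mu = Mf N (lamof N xs)" unfolding P_def by blast
    have "lamof N xs \<in> prob_meas_grid N" using lamof_grid[OF xs(1)] N by simp
    then show "\<exists>lam \<in> prob_meas_grid N. mu = Mf N lam" using xs(2) by blast
  next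
    assume "\<exists>lam \<in> prob_meas_grid N. mu = Mf N lam"
    then obtain lam where lam: "lam \<in> prob_meas_grid N" "mu = Mf N lam" by blast
    obtain xs0 :: "'a list" where xs0: "length xs0 = N" "lamof N xs0 = lam"
      using grid_lamof[OF lam(1)] N by auto
    have muP: "mu \<in> P" unfolding P_def using xs0 lam(2) by blast
    define w where "w = wv N lam"
    define s where "s = 1 / (real N - 1)"
    have "real N - 1 > 0" using N by simp
    then have s0: "1 + s > 0" unfolding s_def by (simp add: add_pos_pos)
    have lamp: "lam \<in> prob_meas" using lam(1) by (simp add: prob_meas_grid_def)
    have wmu: "w \<bullet> mu = - (1 + s) * (\<Sum>i\<in>UNIV. (lam $ i)^2) - s"
      unfolding w_def lam(2) wv_Mf[OF lamp] s_def by (simp add: algebra_simps)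
    have "P - {mu} \<subseteq> {x. w \<bullet> x > w \<bullet> mu}"
    proof
      fix y assume y: "y \<in> P - {mu}"
      then obtain xs :: "'a list" where xs: "length xs = N" "y = Mf N (lamof N xs)" unfolding P_def by blast
      define lam' where "lam' = lamof N xs"
      have lp: "lam' \<in> prob_meas" using lamof_grid[OF xs(1)] N by (simp add: lam'_def prob_meas_grid_def)
      have "lam' \<noteq> lam" using y xs lam(2) lam'_def by auto
      then obtain i where i: "lam' $ i \<noteq> lam $ i" by (auto simp: vec_eq_iff)
      have pos: "(\<Sum>i\<in>UNIV. (lam' $ i - lam $ i)^2) > 0"
        by (rule sum_pos2[where i=i]) (use i in auto)
      have "w \<bullet> y = (1 + s) * (\<Sum>i\<in>UNIV. (lam' $ i - lam $ i)^2) - (1 + s) * (\<Sum>i\<in>UNIV. (lam $ i)^2) - s"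
        unfolding w_def xs(2) lam'_def[symmetric] wv_Mf[OF lp] s_def by simp
      then show "y \<in> {x. w \<bullet> x > w \<bullet> mu}" using wmu mult_pos_pos[OF s0 pos] by (simp add: algebra_simps)
    qed
    then have "convex hull (P - {mu}) \<subseteq> {x. w \<bullet> x > w \<bullet> mu}"
      by (rule hull_minimal) (rule convex_halfspace_gt)
    then have notin: "mu \<notin> convex hull (P - {mu})" by auto
    have "mu extreme_point_of convex hull (insert mu (P - {mu}))"
      by (rule extreme_point_of_convex_hull_insert) (use fP notin in auto)
    then show "mu extreme_point_of N_rep N" unfolding hull using muP by (simp add: insert_absorb)
  qed
qed

end
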